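(* Let $r$ and $m$ be positive integers. Then there exist polynomials $F$ and $G$, independent of $n$, of degrees $m$ and $r-1$ respectively, such that for every positive integer $n$, \[ \sum_{1\le i_1\le i_2\le\cdots\le i_{2r}\le n}(-1)^{i_1}\, i_1^{2m}=(-1)^n F\big(n(n+2r)\big)+G\big(n(n+2r)\big). \]
   Context: The left-hand side is the $2r$-fold alternating power sum ${\sum}^{2r}(-1)^n n^{2m}$, where ${\sum}^{s}(-1)^n(n+x)^m$ is defined as $\sum_{1\le i_1\le\cdots\le i_s\le n}(-1)^{i_1}(i_1+x)^m$. *)

theory Defs
  imports Main "HOL-Computational_Algebra.Polynomial"
begin

definition alt_multi_sum :: "nat \<Rightarrow> nat \<Rightarrow> int \<Rightarrow> nat \<Rightarrow> int" where
  "alt_multi_sum s m x n =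
     (\<Sum>is \<in> {is :: nat list. length is = s \<and> sorted is \<and> set is \<subseteq> {1..n}}.
        (-1) ^ (hd is) * (int (hd is) + x) ^ m)"

end

theory Submission
  imports Defs
begin


lemma S_exists_aux:
  fixes q :: "real poly"
  shows "degree q \<le> d \<Longrightarrow> \<exists>p. degree p \<le> d \<and> (\<forall>x. poly p x + poly p (x-1) = poly q x)"
proof (induction d arbitrary: q)
  case 0
  then obtain c where q: "q = [:c:]" using degree_eq_zeroE[of q] by (metis le_zero_eq)
  show ?case by (rule exI[of _ "[:c/2:]"]) (simp add: q)
next
  case (Suc d)
  define c where "c = coeff q (Suc d)"
  define r where "r = q - monom (c/2) (Suc d) - smult (c/2) ([:-1,1:]^(Suc d))"
  have "degree r \<le> d"
  proof (rule degree_le, intro allI impI)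
    fix i assume "d < i"
    show "coeff r i = 0"
    proof (cases "i = Suc d")
      case True
      have "coeff ([:-1,1:]^(Suc d) :: real poly) (Suc d) = 1" by (rule coeff_linear_power)
      then show ?thesis using True by (simp only: r_def c_def coeff_diff coeff_monom coeff_smult) simp
    next
      case False
      hence "Suc d < i" using \<open>d < i\<close> by simp
      hence "coeff q i = 0" using Suc.prems by (intro coeff_eq_0) simp
      moreover have "coeff ([:-1,1:]^(Suc d) :: real poly) i = 0"
        using \<open>Suc d < i\<close> by (intro coeff_eq_0) (simp only: degree_linear_power)
      ultimately show ?thesis using \<open>Suc d < i\<close> by (simp add: r_def coeff_monom)
    qed
  qed
  then obtain p1 where p1: "degree p1 \<le> d" "\<forall>x. poly p1 x + poly p1 (x-1) = poly r x"
    using Suc.IH by blast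
  show ?case
  proof (rule exI[of _ "monom (c/2) (Suc d) + p1"], intro conjI allI)
    show "degree (monom (c/2) (Suc d) + p1) \<le> Suc d"
      using p1(1) by (intro degree_add_le) (auto simp: degree_monom_le intro: le_trans[OF degree_monom_le])
    fix x :: real
    show "poly (monom (c / 2) (Suc d) + p1) x + poly (monom (c / 2) (Suc d) + p1) (x - 1) = poly q x"
      using p1(2)[rule_format, of x] by (simp add: r_def poly_monom algebra_simps)
  qed
qed

lemma D_exists_aux:
  fixes q :: "real poly"
  shows "degree q \<le> d \<Longrightarrow> \<exists>p. degree p \<le> Suc d \<and> (\<forall>x. poly p x - poly p (x-1) = poly q x)"
proof (induction d arbitrary: q)
  case 0
  then obtain c where q: "q = [:c:]" using degree_eq_zeroE[of q] by (metis le_zero_eq)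
  show ?case by (rule exI[of _ "[:0,c:]"]) (simp add: q algebra_simps)
next
  case (Suc d)
  define c where "c = coeff q (Suc d)"
  define a where "a = c / real (Suc (Suc d))"
  define r where "r = q - (monom a (Suc (Suc d)) - smult a ([:-1,1:]^(Suc (Suc d))))"
  have "degree r \<le> d"
  proof (rule degree_le, intro allI impI)
    fix i assume "d < i"
    show "coeff r i = 0"
    proof (cases "i = Suc d")
      case True
      have "coeff ([:-1,1:]^(Suc (Suc d)) :: real poly) (Suc d) = - real (Suc (Suc d))"
        by (subst coeff_linear_poly_power) auto
      have "coeff ([:-1,1:]^(Suc (Suc d)) :: real poly) (Suc d) * a = - c"
        unfolding a_def by (subst coeff_linear_poly_power) (auto simp: field_simps)
      then show ?thesis using True by (simp only: r_def c_def coeff_diff coeff_monom coeff_smult) (simp add: algebra_simps)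
    next
      case False
      hence "Suc d < i" using \<open>d < i\<close> by simp
      hence "coeff q i = 0" using Suc.prems by (intro coeff_eq_0) simp
      moreover have "coeff ([:-1,1:]^(Suc (Suc d)) :: real poly) i = 0" if "Suc (Suc d) < i"
        using that by (intro coeff_eq_0) (simp only: degree_linear_power)
      moreover have "coeff ([:-1,1:]^(Suc (Suc d)) :: real poly) (Suc (Suc d)) = 1"
        by (rule coeff_linear_power)
      ultimately show ?thesis using \<open>Suc d < i\<close> 
        by (cases "i = Suc (Suc d)") (auto simp add: r_def coeff_monom)
    qed
  qed
  then obtain p1 where p1: "degree p1 \<le> Suc d" "\<forall>x. poly p1 x - poly p1 (x-1) = poly r x"
    using Suc.IH by blast
  show ?case
  proof (rule exI[of _ "monom a (Suc (Suc d)) + p1"], intro conjI allI)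
    show "degree (monom a (Suc (Suc d)) + p1) \<le> Suc (Suc d)"
      using p1(1) by (intro degree_add_le) (auto intro: le_trans[OF degree_monom_le])
    fix x :: real
    show "poly (monom a (Suc (Suc d)) + p1) x - poly (monom a (Suc (Suc d)) + p1) (x - 1) = poly q x"
      using p1(2)[rule_format, of x] by (simp add: r_def poly_monom algebra_simps)
  qed
qed

lemma S_unique:
  fixes p :: "real poly"
  assumes h: "\<forall>x. poly p x + poly p (x-1) = 0"
  shows "p = 0"
proof -
  define c where "c = poly p 0"
  have ev: "poly p (2 * real k) = c" for k :: nat
  proof (induction k)
    case 0 then show ?case by (simp add: c_def)
  next
    case (Suc k)
    have 1: "poly p (2 * real k + 2) + poly p (2 * real k + 1) = 0" using h[rule_format, of "2 * real k + 2"] by (simp add: algebra_simps)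
    have 2: "poly p (2 * real k + 1) + poly p (2 * real k) = 0" using h[rule_format, of "2 * real k + 1"] by (simp add: algebra_simps)
    show ?case using 1 2 Suc.IH by (simp add: algebra_simps)
  qed
  have "p - [:c:] = 0"
  proof (rule ccontr)
    assume ne: "p - [:c:] \<noteq> 0"
    have "range (\<lambda>k::nat. 2 * real k) \<subseteq> {x. poly (p - [:c:]) x = 0}" using ev by auto
    moreover have "infinite (range (\<lambda>k::nat. 2 * real k))"
      by (rule range_inj_infinite) (auto simp: inj_on_def)
    ultimately show False using poly_roots_finite[OF ne] finite_subset by blast
  qed
  hence pc: "p = [:c:]" by simp
  have "c + c = 0" using h[rule_format, of 0] by (simp add: pc)
  thus ?thesis using pc by simp
qed

lemma D_const:
  fixes p :: "real poly"
  assumes h: "\<forall>x. poly p x - poly p (x-1) = 0"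
  shows "p = [:poly p 0:]"
proof -
  define c where "c = poly p 0"
  have ev: "poly p (real k) = c" for k :: nat
  proof (induction k)
    case 0 then show ?case by (simp add: c_def)
  next
    case (Suc k)
    show ?case using h[rule_format, of "real k + 1"] Suc.IH by (simp add: algebra_simps)
  qed
  have "p - [:c:] = 0"
  proof (rule ccontr)
    assume ne: "p - [:c:] \<noteq> 0"
    have "range (\<lambda>k::nat. real k) \<subseteq> {x. poly (p - [:c:]) x = 0}" using ev by auto
    moreover have "infinite (range (\<lambda>k::nat. real k))"
      by (rule range_inj_infinite) (auto simp: inj_on_def)
    ultimately show False using poly_roots_finite[OF ne] finite_subset by blast
  qed
  thus ?thesis by (simp add: c_def)
qed


definition Sinv :: "real poly \<Rightarrow> real poly" where
  "Sinv q = (SOME p. degree p \<le> degree q \<and> (\<forall>x. poly p x + poly p (x-1) = poly q x))"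

definition Dinv :: "real poly \<Rightarrow> real poly" where
  "Dinv q = (SOME p. degree p \<le> Suc (degree q) \<and> (\<forall>x. poly p x - poly p (x-1) = poly q x))"

lemma Sinv: "degree (Sinv q) \<le> degree q" "poly (Sinv q) x + poly (Sinv q) (x-1) = poly q x"
proof -
  have "\<exists>p. degree p \<le> degree q \<and> (\<forall>x. poly p x + poly p (x-1) = poly q x)"
    using S_exists_aux by blast
  from someI_ex[OF this] show "degree (Sinv q) \<le> degree q" "poly (Sinv q) x + poly (Sinv q) (x-1) = poly q x"
    unfolding Sinv_def by blast+
qed

lemma Dinv: "degree (Dinv q) \<le> Suc (degree q)" "poly (Dinv q) x - poly (Dinv q) (x-1) = poly q x"
proof -
  have "\<exists>p. degree p \<le> Suc (degree q) \<and> (\<forall>x. poly p x - poly p (x-1) = poly q x)"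
    using D_exists_aux by blast
  from someI_ex[OF this] show "degree (Dinv q) \<le> Suc (degree q)" "poly (Dinv q) x - poly (Dinv q) (x-1) = poly q x"
    unfolding Dinv_def by blast+
qed

lemma S_eqI:
  fixes p q :: "real poly"
  assumes "\<And>x. poly p x + poly p (x-1) = poly q x + poly q (x-1)"
  shows "p = q"
proof -
  have "p - q = 0" by (rule S_unique) (use assms in \<open>auto simp: algebra_simps\<close>)
  thus ?thesis by simp
qed

lemma Sinv_unique:
  assumes "\<And>x. poly p x + poly p (x-1) = poly q x"
  shows "Sinv q = p"
  by (rule S_eqI) (simp add: Sinv assms)

lemma S_degree_le:
  fixes p q :: "real poly"
  assumes "\<And>x. poly p x + poly p (x-1) = poly q x"
  shows "degree q \<le> degree p"
proof -
  have "q = p + pcompose p [:-1,1:]" by (rule poly_ext) (simp add: poly_pcompose assms[symmetric])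
  hence "degree q \<le> max (degree p) (degree (pcompose p [:-1,1:]))" using degree_add_le_max by metis
  thus ?thesis by (simp add: degree_pcompose)
qed

lemma D_degree_lt:
  fixes p q :: "real poly"
  assumes "\<And>x. poly p x - poly p (x-1) = poly q x" and "q \<noteq> 0"
  shows "degree q < degree p"
proof -
  have qe: "q = p - pcompose p [:-1,1:]" by (rule poly_ext) (simp add: poly_pcompose assms(1)[symmetric])
  have dp: "degree (pcompose p [:-1,1:]) = degree p" by (simp add: degree_pcompose)
  have "degree p \<noteq> 0"
  proof
    assume "degree p = 0"
    then obtain c where "p = [:c:]" using degree_eq_zeroE by blast
    hence "q = 0" using qe by (simp add: pcompose_pCons)
    thus False using assms(2) by simp
  qed
  have lc: "lead_coeff (pcompose p [:-1,1:]) = lead_coeff p"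
    by (subst lead_coeff_comp) auto
  have le: "degree q \<le> degree p" using qe dp degree_diff_le_max[of p "pcompose p [:-1,1:]"] by simp
  have c0: "coeff q (degree p) = 0" using qe lc dp by simp
  show ?thesis
  proof (rule ccontr)
    assume "\<not> ?thesis"
    hence "degree q = degree p" using le by simp
    hence "lead_coeff q = 0" using c0 by simp
    thus False using assms(2) by simp
  qed
qed

definition AA :: "nat \<Rightarrow> real poly" where "AA n = Sinv (monom 1 n)"
definition aa :: "nat \<Rightarrow> real" where "aa n = poly (AA n) 0"

lemma AA_eq: "poly (AA n) x + poly (AA n) (x-1) = x ^ n"
  unfolding AA_def by (simp add: Sinv poly_monom)

lemma Appell0: "poly (AA n) x = (\<Sum>k\<le>n. of_nat (n choose k) * x ^ k * aa (n-k))"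
proof -
  define q where "q = (\<Sum>k\<le>n. smult (of_nat (n choose k) * aa (n-k)) (monom 1 k))"
  have "poly (AA n) (x + y) = (\<Sum>k\<le>n. of_nat (n choose k) * x ^ k * poly (AA (n-k)) y)" for y
  proof -
    define p where "p = pcompose (AA n) [:x,1:]"
    define r where "r = (\<Sum>k\<le>n. smult (of_nat (n choose k) * x ^ k) (AA (n-k)))"
    have "p = r"
    proof (rule S_eqI)
      fix z
      have "poly p z + poly p (z-1) = (x + z) ^ n"
        using AA_eq[of n "x+z"] by (simp add: p_def poly_pcompose algebra_simps)
      also have "\<dots> = (\<Sum>k\<le>n. of_nat (n choose k) * x ^ k * z ^ (n-k))"
        by (subst binomial_ring) (simp add: algebra_simps)
      also have "\<dots> = (\<Sum>k\<le>n. of_nat (n choose k) * x ^ k * (poly (AA (n-k)) z + poly (AA (n-k)) (z-1)))"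
        by (simp add: AA_eq)
      also have "\<dots> = poly r z + poly r (z-1)"
        by (simp add: r_def poly_sum algebra_simps sum.distrib)
      finally show "poly p z + poly p (z-1) = poly r z + poly r (z-1)" .
    qed
    hence "poly p y = poly r y" by simp
    thus ?thesis by (simp add: p_def r_def poly_pcompose poly_sum algebra_simps)
  qed
  from this[of 0] show ?thesis by (simp add: aa_def)
qed

lemma quad: "(\<Sum>k\<le>n. of_nat (n choose k) * aa k * aa (n-k)) = aa n - aa (Suc n)"
proof -
  define p where "p = (\<Sum>k\<le>n. smult (of_nat (n choose k) * aa (n-k)) (AA k))"
  define q where "q = [:1,1:] * AA n - AA (Suc n)"
  have "p = q"
  proof (rule S_eqI)
    fix z :: real
    have "poly p z + poly p (z-1) = (\<Sum>k\<le>n. of_nat (n choose k) * aa (n-k) * (poly (AA k) z + poly (AA k) (z-1)))"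
      by (simp add: p_def poly_sum algebra_simps sum.distrib)
    also have "\<dots> = poly (AA n) z" by (simp add: AA_eq Appell0[of n z] algebra_simps)
    also have "\<dots> = poly q z + poly q (z-1)"
      using AA_eq[of n z] AA_eq[of "Suc n" z] distrib_left[of z "poly (AA n) z" "poly (AA n) (z-1)"]
      by (simp add: q_def algebra_simps)
    finally show "poly p z + poly p (z-1) = poly q z + poly q (z-1)" .
  qed
  hence "poly p 0 = poly q 0" by simp
  thus ?thesis by (simp add: p_def q_def poly_sum aa_def algebra_simps)
qed

lemma aa0: "aa 0 = 1/2"
proof -
  have "AA 0 = [:1/2:]" unfolding AA_def by (rule Sinv_unique) simp
  thus ?thesis by (simp add: aa_def)
qed


lemma aa1: "aa 1 = 1/4"
  using quad[of 0] by (simp add: aa0)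

lemma aa_rec:
  assumes "n \<ge> 1"
  shows "aa (Suc n) = - (\<Sum>k\<in>{1..<n}. of_nat (n choose k) * aa k * aa (n-k))"
proof -
  have set: "{..n} = insert 0 (insert n {1..<n})" using assms by auto
  have "(\<Sum>k\<le>n. of_nat (n choose k) * aa k * aa (n-k)) =
        aa n + (\<Sum>k\<in>{1..<n}. of_nat (n choose k) * aa k * aa (n-k))"
    using assms by (subst set, subst sum.insert, simp, simp, subst sum.insert, auto simp: aa0)
  thus ?thesis using quad[of n] by simp
qed

lemma aa_sign: "(even n \<and> n \<ge> 2 \<longrightarrow> aa n = 0) \<and> (odd n \<longrightarrow> (-1)^((n-1) div 2) * aa n > 0)"
proof (induction n rule: less_induct)
  case (less n)
  show ?case
  proof (cases "n \<le> 1")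
    case True
    then show ?thesis using aa1 by (cases n) auto
  next
    case False
    then obtain n' where n': "n = Suc n'" "n' \<ge> 1" by (cases n) auto
    have IHz: "aa k = 0" if "even k" "k \<ge> 2" "k < n" for k using less[OF that(3)] that by blast
    have IHp: "(-1)^((k-1) div 2) * aa k > 0" if "odd k" "k < n" for k using less[OF that(2)] that by blast
    show ?thesis
    proof (cases "even n")
      case True
      have "(\<Sum>k\<in>{1..<n'}. of_nat (n' choose k) * aa k * aa (n'-k)) = 0"
      proof (rule sum.neutral, intro ballI)
        fix k assume k: "k \<in> {1..<n'}"
        have "odd n'" using True n' by simp
        show "of_nat (n' choose k) * aa k * aa (n'-k) = 0"
        proof (cases "even k")
          case True
          then show ?thesis using IHz[of k] k n' by (cases "k = 0") auto
        next
          case False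
          hence e: "even (n'-k)" using \<open>odd n'\<close> k by auto
          have "n' - k \<noteq> 0" using k by simp
          hence "n' - k \<ge> 2" using e by presburger
          hence "aa (n'-k) = 0" using IHz[of "n'-k"] e n' by simp
          then show ?thesis by simp
        qed
      qed
      then show ?thesis using aa_rec[OF n'(2)] n' True by simp
    next
      case False
      hence ev: "even n'" using n' by simp
      hence n2: "n' \<ge> 2" using n' by (cases "n' = 1") auto
      define j where "j = n' div 2"
      have nj: "n' = 2 * j" using ev j_def by simp
      have j1: "j \<ge> 1" using n2 nj by simp
      have pos: "(-1)^(j-1) * (\<Sum>k\<in>{1..<n'}. of_nat (n' choose k) * aa k * aa (n'-k)) > 0"
      proof -
        have "(-1)^(j-1) * (\<Sum>k\<in>{1..<n'}. of_nat (n' choose k) * aa k * aa (n'-k))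
              = (\<Sum>k\<in>{1..<n'}. (-1)^(j-1) * (of_nat (n' choose k) * aa k * aa (n'-k)))"
          by (simp add: sum_distrib_left)
        also have "\<dots> > 0"
        proof (rule sum_pos2[where i=1])
          show "finite {1..<n'}" by simp
          show "1 \<in> {1..<n'}" using n2 by simp
          have "odd (n' - 1)" using ev n2 by simp
          hence "(-1)^((n'-1-1) div 2) * aa (n'-1) > 0" using IHp[of "n'-1"] n' by simp
          moreover have "(n'-1-1) div 2 = j - 1" using nj by simp
          ultimately have "(-1)^(j-1) * aa (n'-1) > 0" by simp
          moreover have "aa 1 > 0" using aa1 by simp
          moreover have "real (n' choose 1) > 0" using n2 by simp
          ultimately show "0 < (-1)^(j-1) * (of_nat (n' choose 1) * aa 1 * aa (n'-1))"
            by (metis (no_types, lifting) mult.left_commute mult_pos_pos)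
        next
          fix k assume k: "k \<in> {1..<n'}"
          show "0 \<le> (-1)^(j-1) * (of_nat (n' choose k) * aa k * aa (n'-k))"
          proof (cases "even k")
            case True
            then show ?thesis using IHz[of k] k n' by (cases "k = 0") auto
          next
            case False
            hence o2: "odd (n'-k)" using ev k by auto
            have p1: "(-1)^((k-1) div 2) * aa k > 0" using IHp[of k] False k n' by simp
            have p2: "(-1)^((n'-k-1) div 2) * aa (n'-k) > 0" using IHp[of "n'-k"] o2 k n' by simp
            have e: "(k-1) div 2 + (n'-k-1) div 2 = j - 1"
              using False o2 k nj by (auto elim!: oddE)
            have "(-1)^(j-1) * (of_nat (n' choose k) * aa k * aa (n'-k)) =
                  of_nat (n' choose k) * (((-1)^((k-1) div 2) * aa k) * ((-1)^((n'-k-1) div 2) * aa (n'-k)))"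
              proof -
                have sg: "(-1::real)^(j-1) = (-1)^((k-1) div 2) * (-1)^((n'-k-1) div 2)"
                  by (subst e[symmetric]) (rule power_add)
                show ?thesis by (simp only: sg) (simp add: algebra_simps)
              qed
            also have "\<dots> \<ge> 0" using p1 p2 by simp
            finally show ?thesis .
          qed
        qed
        finally show ?thesis .
      qed
      have "(n - 1) div 2 = j" using n' nj by simp
      moreover have "(-1)^j * aa n = (-1)^(j-1) * (\<Sum>k\<in>{1..<n'}. of_nat (n' choose k) * aa k * aa (n'-k))"
        using aa_rec[OF n'(2)] n'(1) j1 by (cases j) auto
      ultimately show ?thesis using pos False by simp
    qed
  qed
qed

lemma aa_even: "even n \<Longrightarrow> n \<ge> 2 \<Longrightarrow> aa n = 0" using aa_sign by blast
lemma aa_odd: "odd n \<Longrightarrow> aa n \<noteq> 0" using aa_sign[of n] by auto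


fun T :: "nat \<Rightarrow> nat \<Rightarrow> nat \<Rightarrow> real" where
  "T N 0 n = (-1)^n * real n ^ N"
| "T N (Suc s) 0 = 0"
| "T N (Suc s) (Suc n) = T N (Suc s) n + T N s (Suc n)"

primrec PP :: "nat \<Rightarrow> nat \<Rightarrow> real poly" where
  "PP N 0 = monom 1 N"
| "PP N (Suc s) = Sinv (PP N s)"

primrec QQ :: "nat \<Rightarrow> nat \<Rightarrow> real poly" where
  "QQ N 0 = 0"
| "QQ N (Suc s) = Dinv (QQ N s) + [: - poly (PP N (Suc s)) 0 - poly (Dinv (QQ N s)) 0 :]"

declare PP.simps(2)[simp del] QQ.simps(2)[simp del]

lemma PP_step: "poly (PP N (Suc s)) x + poly (PP N (Suc s)) (x-1) = poly (PP N s) x"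
  by (simp add: Sinv PP.simps(2))

lemma QQ_step: "poly (QQ N (Suc s)) x - poly (QQ N (Suc s)) (x-1) = poly (QQ N s) x"
  using Dinv(2)[of "QQ N s" x] by (simp add: QQ.simps(2))

lemma QQ_0: "poly (QQ N (Suc s)) 0 = - poly (PP N (Suc s)) 0"
  by (simp add: QQ.simps(2))

lemma T_repr: "T N s n = (-1)^n * poly (PP N s) (real n) + poly (QQ N s) (real n)"
proof (induction s arbitrary: n)
  case 0
  then show ?case by (simp add: poly_monom)
next
  case (Suc s)
  note IHs = Suc.IH
  show ?case
  proof (induction n)
    case 0
    then show ?case using QQ_0[of N s] by simp
  next
    case (Suc n)
    have a: "poly (PP N (Suc s)) (real (Suc n)) + poly (PP N (Suc s)) (real n) = poly (PP N s) (real (Suc n))"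
      using PP_step[of N s "real (Suc n)"] by simp
    have b: "poly (QQ N (Suc s)) (real (Suc n)) - poly (QQ N (Suc s)) (real n) = poly (QQ N s) (real (Suc n))"
      using QQ_step[of N s "real (Suc n)"] by simp
    show ?case
      by (simp only: T.simps Suc.IH IHs a[symmetric] b[symmetric]) (simp add: algebra_simps)
  qed
qed

lemma Hneg:
  assumes "N \<ge> 1"
  shows "j \<le> s \<Longrightarrow> (-1)^j * poly (PP N s) (- real j) + poly (QQ N s) (- real j) = 0"
proof (induction s arbitrary: j)
  case 0
  then show ?case using assms by (simp add: poly_monom)
next
  case (Suc s)
  note IHs = Suc.IH
  show ?case using Suc.prems
  proof (induction j)
    case 0
    then show ?case using QQ_0[of N s] by simp
  next
    case (Suc j)
    have a: "poly (PP N (Suc s)) (- real j) + poly (PP N (Suc s)) (- real j - 1) = poly (PP N s) (- real j)"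
      using PP_step[of N s "- real j"] by simp
    have b: "poly (QQ N (Suc s)) (- real j) - poly (QQ N (Suc s)) (- real j - 1) = poly (QQ N s) (- real j)"
      using QQ_step[of N s "- real j"] by simp
    have c: "(-1)^j * poly (PP N s) (- real j) + poly (QQ N s) (- real j) = 0"
      using IHs[of j] Suc.prems by simp
    have d: "(-1)^j * poly (PP N (Suc s)) (- real j) + poly (QQ N (Suc s)) (- real j) = 0"
      using Suc.IH Suc.prems by simp
    have e: "- real (Suc j) = - real j - 1" by simp
    have c': "(-1)^j * poly (PP N (Suc s)) (- real j) + (-1)^j * poly (PP N (Suc s)) (- real j - 1) + poly (QQ N s) (- real j) = 0"
      using c unfolding a[symmetric] by (simp add: algebra_simps)
    show ?case unfolding e using b c' d by (simp add: algebra_simps)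
  qed
qed

lemma PP_sym:
  assumes "even N"
  shows "poly (PP N s) (- x - real s) = poly (PP N s) x"
proof (induction s arbitrary: x)
  case 0
  then show ?case using assms by (simp add: poly_monom)
next
  case (Suc s)
  define p' where "p' = pcompose (PP N (Suc s)) [:- real (Suc s), -1:]"
  have "Sinv (PP N s) = p'"
  proof (rule Sinv_unique)
    fix y
    have "poly p' y + poly p' (y-1) = poly (PP N (Suc s)) (- y - real s - 1) + poly (PP N (Suc s)) (- y - real s)"
      unfolding p'_def poly_pcompose
      by (intro arg_cong2[where f="(+)"] arg_cong[where f="poly (PP N (Suc s))"]) auto
    also have "\<dots> = poly (PP N s) (- y - real s)" using PP_step[of N s "- y - real s"] by linarith
    also have "\<dots> = poly (PP N s) y" by (rule Suc.IH)
    finally show "poly p' y + poly p' (y-1) = poly (PP N s) y" .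
  qed
  hence "PP N (Suc s) = p'" by (simp add: PP.simps(2))
  hence "poly (PP N (Suc s)) x = poly p' x" by simp
  also have "\<dots> = poly (PP N (Suc s)) (- x - real (Suc s))" unfolding p'_def poly_pcompose
    by (intro arg_cong[where f="poly (PP N (Suc s))"]) auto
  finally show ?case by simp
qed

lemma PP_degree: "degree (PP N s) = N"
proof (induction s)
  case 0
  then show ?case by (simp add: degree_monom_eq)
next
  case (Suc s)
  have "degree (PP N (Suc s)) \<le> degree (PP N s)" by (simp add: Sinv PP.simps(2))
  moreover have "degree (PP N s) \<le> degree (PP N (Suc s))"
    by (rule S_degree_le) (rule PP_step)
  ultimately show ?case using Suc by simp
qed

lemma PP1: "PP N 1 = AA N" by (simp add: AA_def PP.simps(2))

lemma PP2: "PP N 2 = [:1,1:] * AA N - AA (Suc N)"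
proof -
  have "Sinv (AA N) = [:1,1:] * AA N - AA (Suc N)"
  proof (rule Sinv_unique)
    fix z :: real
    show "poly ([:1,1:] * AA N - AA (Suc N)) z + poly ([:1,1:] * AA N - AA (Suc N)) (z - 1) = poly (AA N) z"
      using AA_eq[of N z] AA_eq[of "Suc N" z] distrib_left[of z "poly (AA N) z" "poly (AA N) (z-1)"]
      by (simp add: algebra_simps)
  qed
  thus ?thesis by (simp add: numeral_2_eq_2 AA_def PP.simps(2))
qed

lemma QQ1:
  assumes "even N" "N \<ge> 2"
  shows "QQ N 1 = 0"
proof -
  have "\<forall>x. poly (QQ N 1) x - poly (QQ N 1) (x-1) = 0" using QQ_step[of N 0] by simp
  hence "QQ N 1 = [:poly (QQ N 1) 0:]" by (rule D_const)
  moreover have "poly (QQ N 1) 0 = 0" using QQ_0[of N 0] PP1[of N] aa_even[OF assms] by (simp add: aa_def)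
  ultimately show ?thesis by simp
qed

lemma QQ2:
  assumes "even N" "N \<ge> 2"
  shows "QQ N 2 = [: aa (Suc N) :]"
proof -
  have "\<forall>x. poly (QQ N 2) x - poly (QQ N 2) (x-1) = 0" using QQ_step[of N 1] QQ1[OF assms]
    by (simp add: numeral_2_eq_2)
  hence "QQ N 2 = [:poly (QQ N 2) 0:]" by (rule D_const)
  moreover have "poly (QQ N 2) 0 = aa (Suc N)" using QQ_0[of N 1] PP2[of N] aa_even[OF assms]
    by (simp add: aa_def numeral_2_eq_2)
  ultimately show ?thesis by simp
qed

lemma QQ_degree:
  assumes "even N" "N \<ge> 2"
  shows "t \<ge> 2 \<Longrightarrow> degree (QQ N t) = t - 2 \<and> QQ N t \<noteq> 0"
proof (induction t rule: dec_induct)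
  case base
  then show ?case using QQ2[OF assms] aa_odd[of "Suc N"] assms by simp
next
  case (step t)
  have up: "degree (QQ N (Suc t)) \<le> Suc (degree (QQ N t))"
  proof -
    have "degree (QQ N (Suc t)) \<le> max (degree (Dinv (QQ N t))) 0"
      unfolding QQ.simps(2) by (metis degree_add_le_max degree_pCons_0)
    thus ?thesis using Dinv(1)[of "QQ N t"] by simp
  qed
  have lt: "degree (QQ N t) < degree (QQ N (Suc t))"
    by (rule D_degree_lt[OF QQ_step]) (use step in auto)
  have "QQ N (Suc t) \<noteq> 0" using lt by auto
  then show ?case using up lt step by auto
qed


lemma QQ_sym:
  assumes "even N" "N \<ge> 2" "even s" "s \<ge> 2"
  shows "poly (QQ N s) (- x - real s) = poly (QQ N s) x"
proof -
  define q' where "q' = pcompose (QQ N s) [:- real s, -1:]"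
  have pq': "poly q' y = poly (QQ N s) (- y - real s)" for y
    unfolding q'_def poly_pcompose by (intro arg_cong[where f="poly (QQ N s)"]) auto
  have dQ: "degree (QQ N s) = s - 2" using QQ_degree[OF assms(1,2) assms(4)] by simp
  have dq': "degree q' = s - 2" using dQ by (simp add: q'_def degree_pcompose)
  define A where "A = (\<lambda>j. - real j) ` {0..s}"
  have cA: "card A = Suc s" unfolding A_def by (subst card_image) (auto simp: inj_on_def)
  have "QQ N s = q'"
  proof (rule poly_eqI_degree[of A])
    fix y assume "y \<in> A"
    then obtain j where j: "j \<le> s" "y = - real j" by (auto simp: A_def)
    have N1: "N \<ge> 1" using assms by simp
    have h1: "(-1)^j * poly (PP N s) (- real j) + poly (QQ N s) (- real j) = 0"
      using Hneg[OF N1 j(1)] .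
    have h2: "(-1)^(s-j) * poly (PP N s) (- real (s-j)) + poly (QQ N s) (- real (s-j)) = 0"
      using Hneg[OF N1, of "s-j" s] by simp
    have ps: "poly (PP N s) (- real (s-j)) = poly (PP N s) (- real j)"
      using PP_sym[OF assms(1), of s "- real j"] j(1) by (simp add: of_nat_diff)
    have sg: "(-1::real)^(s-j) = (-1)^j"
    proof -
      have "even (s - j) \<longleftrightarrow> even j" using assms(3) j(1) by presburger
      thus ?thesis by (cases "even j") auto
    qed
    have "poly q' y = poly (QQ N s) (- real (s-j))"
      unfolding pq' j(2) using j(1) by (intro arg_cong[where f="poly (QQ N s)"]) (simp add: of_nat_diff)
    also have "\<dots> = poly (QQ N s) y" using h1 h2 ps sg j(2) by simp
    finally show "poly (QQ N s) y = poly q' y" by simp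
  qed (use cA dQ dq' in auto)
  hence "poly (QQ N s) x = poly q' x" by simp
  thus ?thesis by (simp add: pq')
qed

lemma sym_poly:
  fixes p :: "real poly" and c :: real
  assumes "\<forall>x. poly p (- x - c) = poly p x"
  shows "\<exists>F. (\<forall>x. poly p x = poly F (x * (x + c))) \<and> 2 * degree F = degree p"
  using assms
proof (induction "degree p" arbitrary: p rule: less_induct)
  case less
  show ?case
  proof (cases "degree p = 0")
    case True
    then obtain a where a: "p = [:a:]" using degree_eq_zeroE by blast
    show ?thesis by (rule exI[of _ p]) (simp add: a)
  next
    case False
    hence p0: "p \<noteq> 0" by auto
    define w :: "real poly" where "w = [:0, c, 1:]"
    have pw: "poly w x = x * (x + c)" for x by (simp add: w_def algebra_simps)
    have w0: "w \<noteq> 0" by (simp add: w_def)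
    have dw: "degree w = 2" by (simp add: w_def)
    have lw: "lead_coeff w = 1" by (simp add: w_def)
    have pe: "pcompose p [:-c, -1:] = p"
    proof (rule poly_ext)
      fix x
      have "poly (pcompose p [:-c, -1:]) x = poly p (- x - c)"
        unfolding poly_pcompose by (intro arg_cong[where f="poly p"]) auto
      thus "poly (pcompose p [:-c, -1:]) x = poly p x" using less.prems by simp
    qed
    have "lead_coeff (pcompose p [:-c, -1:]) = lead_coeff p * (-1)^degree p"
      by (subst lead_coeff_comp) auto
    hence "lead_coeff p * (-1)^degree p = lead_coeff p" using pe by simp
    hence m1: "(-1::real)^degree p = 1" using p0 by simp
    have ev: "even (degree p)"
    proof (rule ccontr)
      assume "odd (degree p)"
      hence "(-1::real)^degree p = -1" by simp
      thus False using m1 by simp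
    qed
    define k where "k = degree p div 2"
    have dk: "degree p = 2 * k" using ev k_def by simp
    define l where "l = lead_coeff p"
    have l0: "l \<noteq> 0" using p0 by (simp add: l_def)
    define p1 where "p1 = p - smult l (w ^ k)"
    have dwk: "degree (w ^ k) = 2 * k" using w0 dw by (simp add: degree_power_eq)
    have lwk: "lead_coeff (w ^ k) = 1" using lw by (simp add: lead_coeff_power)
    have d1le: "degree p1 \<le> degree p"
      unfolding p1_def using dwk dk degree_diff_le_max[of p "smult l (w ^ k)"] by simp
    have c1: "coeff p1 (degree p) = 0"
      unfolding p1_def using lwk dwk dk by (simp add: l_def)
    have d1: "degree p1 < degree p"
    proof (rule ccontr)
      assume "\<not> ?thesis"
      hence "degree p1 = degree p" using d1le by simp
      hence "p1 = 0" using c1 by (metis leading_coeff_0_iff)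
      thus False using \<open>degree p1 = degree p\<close> False by simp
    qed
    have sym1: "\<forall>x. poly p1 (- x - c) = poly p1 x"
    proof
      fix x
      have "(- x - c) * (- x - c + c) = x * (x + c)" by (simp add: algebra_simps)
      thus "poly p1 (- x - c) = poly p1 x" using less.prems by (simp add: p1_def pw)
    qed
    obtain F1 where F1: "\<forall>x. poly p1 x = poly F1 (x * (x + c))" "2 * degree F1 = degree p1"
      using less.hyps[OF d1 sym1] by blast
    define F where "F = F1 + monom l k"
    have dF1: "degree F1 < k" using F1(2) d1 dk by simp
    have dF: "degree F = k" unfolding F_def
      by (subst degree_add_eq_right) (use dF1 l0 in \<open>auto simp: degree_monom_eq\<close>)
    show ?thesis
    proof (rule exI[of _ F], intro conjI allI)
      fix x
      have "poly p x = poly p1 x + l * (x * (x + c)) ^ k" by (simp add: p1_def pw)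
      also have "\<dots> = poly F (x * (x + c))" using F1(1) by (simp add: F_def poly_monom)
      finally show "poly p x = poly F (x * (x + c))" .
    next
      show "2 * degree F = degree p" using dF dk by simp
    qed
  qed
qed


definition LL :: "nat \<Rightarrow> nat \<Rightarrow> nat list set" where
  "LL s n = {is. length is = s \<and> sorted is \<and> set is \<subseteq> {1..n}}"

lemma LL_fin: "finite (LL s n)"
proof -
  have "LL s n \<subseteq> {xs. set xs \<subseteq> {1..n} \<and> length xs = s}" by (auto simp: LL_def)
  thus ?thesis using finite_lists_length_eq[of "{1..n}" s] finite_subset by blast
qed

lemma LL_0: "LL (Suc s) 0 = {}"
  by (auto simp: LL_def)

lemma LL_nil: "LL 0 n = {[]}"
  by (auto simp: LL_def)

lemma LL_Suc: "LL (Suc s) (Suc n) = LL (Suc s) n \<union> (\<lambda>is. is @ [Suc n]) ` LL s (Suc n)"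
proof
  show "LL (Suc s) (Suc n) \<subseteq> LL (Suc s) n \<union> (\<lambda>is. is @ [Suc n]) ` LL s (Suc n)"
  proof
    fix xs assume xs: "xs \<in> LL (Suc s) (Suc n)"
    show "xs \<in> LL (Suc s) n \<union> (\<lambda>is. is @ [Suc n]) ` LL s (Suc n)"
    proof (cases "Suc n \<in> set xs")
      case False
      hence "set xs \<subseteq> {1..n}" using xs by (auto simp: LL_def le_Suc_eq)
      thus ?thesis using xs by (auto simp: LL_def)
    next
      case True
      hence ne: "xs \<noteq> []" by auto
      define b where "b = butlast xs"
      define l where "l = last xs"
      have xe: "xs = b @ [l]" using ne by (simp add: b_def l_def)
      have srt: "sorted (b @ [l])" using xs xe by (simp add: LL_def)
      hence bl: "\<forall>x\<in>set b. x \<le> l" and sb: "sorted b" by (auto simp: sorted_append)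
      have "l \<le> Suc n" using xs xe by (auto simp: LL_def)
      moreover have "Suc n \<le> l" using True bl xe by auto
      ultimately have "l = Suc n" by simp
      moreover have "b \<in> LL s (Suc n)" using xs xe sb by (auto simp: LL_def)
      ultimately show ?thesis using xe by auto
    qed
  qed
next
  show "LL (Suc s) n \<union> (\<lambda>is. is @ [Suc n]) ` LL s (Suc n) \<subseteq> LL (Suc s) (Suc n)"
    by (auto simp: LL_def sorted_append; force)
qed

lemma LL_sum:
  fixes f :: "nat \<Rightarrow> int"
  shows "(\<Sum>is\<in>LL (Suc s) (Suc n). f (hd is)) =
         (\<Sum>is\<in>LL (Suc s) n. f (hd is)) + (\<Sum>is\<in>LL s (Suc n). f (hd (is @ [Suc n])))"
proof -
  have disj: "LL (Suc s) n \<inter> (\<lambda>is. is @ [Suc n]) ` LL s (Suc n) = {}"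
    by (auto simp: LL_def)
  have inj: "inj_on (\<lambda>is. is @ [Suc n]) (LL s (Suc n))" by (auto simp: inj_on_def)
  show ?thesis
    unfolding LL_Suc
    by (subst sum.union_disjoint) (use disj LL_fin inj in \<open>auto simp: sum.reindex\<close>)
qed

lemma alt_T: "real_of_int (alt_multi_sum (Suc s) N 0 n) = T N (Suc s) n"
proof (induction s arbitrary: n)
  case 0
  show ?case
  proof (induction n)
    case 0
    then show ?case unfolding alt_multi_sum_def LL_def[symmetric] LL_0 by simp
  next
    case (Suc n)
    have "alt_multi_sum (Suc 0) N 0 (Suc n) = alt_multi_sum (Suc 0) N 0 n + (-1)^(Suc n) * int (Suc n) ^ N"
      unfolding alt_multi_sum_def LL_def[symmetric]
      by (subst LL_sum) (simp add: LL_nil)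
    then show ?case using Suc.IH by simp
  qed
next
  case (Suc s)
  note IHs = Suc.IH
  show ?case
  proof (induction n)
    case 0
    then show ?case unfolding alt_multi_sum_def LL_def[symmetric] LL_0 by simp
  next
    case (Suc n)
    have "alt_multi_sum (Suc (Suc s)) N 0 (Suc n) = alt_multi_sum (Suc (Suc s)) N 0 n + alt_multi_sum (Suc s) N 0 (Suc n)"
    proof -
      have "(\<Sum>is\<in>LL (Suc s) (Suc n). (-1::int) ^ hd (is @ [Suc n]) * (int (hd (is @ [Suc n])) + 0) ^ N)
          = (\<Sum>is\<in>LL (Suc s) (Suc n). (-1::int) ^ hd is * (int (hd is) + 0) ^ N)"
        by (rule sum.cong) (auto simp: LL_def hd_append)
      thus ?thesis unfolding alt_multi_sum_def LL_def[symmetric]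
        by (subst LL_sum) simp
    qed
    then show ?case using Suc.IH IHs[of "Suc n"] by simp
  qed
qed

theorem mainTheorem6:
  fixes r m :: nat
  assumes "r \<ge> 1" and "m \<ge> 1"
  shows "\<exists>F G :: real poly. degree F = m \<and> degree G = r - 1 \<and>
           (\<forall>n::nat. n \<ge> 1 \<longrightarrow>
              real_of_int (alt_multi_sum (2 * r) (2 * m) 0 n)
                = (-1) ^ n * poly F (real (n * (n + 2 * r))) + poly G (real (n * (n + 2 * r))))"
proof -
  define N where "N = 2 * m"
  define s where "s = 2 * r"
  have eN: "even N" "N \<ge> 2" using assms by (auto simp: N_def)
  have es: "even s" "s \<ge> 2" using assms by (auto simp: s_def)
  have Psym: "\<forall>x. poly (PP N s) (- x - real s) = poly (PP N s) x" using PP_sym[OF eN(1)] by blast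
  have Qsym: "\<forall>x. poly (QQ N s) (- x - real s) = poly (QQ N s) x" using QQ_sym[OF eN es] by blast
  obtain F where F: "\<forall>x. poly (PP N s) x = poly F (x * (x + real s))" "2 * degree F = degree (PP N s)"
    using sym_poly[OF Psym] by blast
  obtain G where G: "\<forall>x. poly (QQ N s) x = poly G (x * (x + real s))" "2 * degree G = degree (QQ N s)"
    using sym_poly[OF Qsym] by blast
  have dF: "degree F = m" using F(2) PP_degree[of N s] by (simp add: N_def)
  have dG: "degree G = r - 1" using G(2) QQ_degree[OF eN es(2)] by (simp add: s_def)
  show ?thesis
  proof (intro exI conjI allI impI)
    show "degree F = m" by (rule dF)
    show "degree G = r - 1" by (rule dG)
    fix n :: nat assume "n \<ge> 1"
    have ss: "2 * r = Suc (s - 1)" using es by (simp add: s_def)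
    have "real_of_int (alt_multi_sum (2 * r) (2 * m) 0 n) = T N s n"
      unfolding ss using alt_T[of "s - 1" N n] es by (simp add: N_def)
    also have "\<dots> = (-1)^n * poly (PP N s) (real n) + poly (QQ N s) (real n)" by (rule T_repr)
    also have "\<dots> = (-1) ^ n * poly F (real (n * (n + 2 * r))) + poly G (real (n * (n + 2 * r)))"
      using F(1) G(1) by (simp add: s_def)
    finally show "real_of_int (alt_multi_sum (2 * r) (2 * m) 0 n) = (-1) ^ n * poly F (real (n * (n + 2 * r))) + poly G (real (n * (n + 2 * r)))" .
  qed
qed

end
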